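(* Let $D$ be a digraph with $n$ nodes. If $D$ contains no arcs, or if $n\in\{1,2\}$, then the burning number of $D$ equals $n$. If $n>2$ and $D$ has at least one arc, then the burning number of $D$ is at most $n-1$, and this bound is sharp: for every $n>2$ there exists a digraph with $n$ nodes and at least one arc whose burning number equals $n-1$.
   Context: Burning process on a digraph $D$: a sequence $(x_1,\ldots,x_b)$ of nodes is a burning sequence for $D$ if after $b$ steps of the following process every node of $D$ is burned; the $i$-th step consists of first burning all out-neighbours of all currently burned nodes, and then burning the node $x_i$ (so after the first step only $x_1$ is burned). The burning number of $D$ is the length of a shortest burning sequence for $D$. Equivalently, writing $N^+_k(v)$ for the set of nodes reachable from $v$ by a directed path with at most $k$ arcs (so $N^+_0(v)=\{v\}$), the burning number is the least $b$ for which there are nodes $v_1,\ldots,v_b$ with $V(D)=\bigcup_{i=1}^b N^+_{i-1}(v_i)$. *)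

theory Defs
  imports Main
begin

text \<open>A (finite, loopless) digraph is given by a finite node set V and an arc
relation A on V without loops; parallel arcs are irrelevant for burning.\<close>
definition digraph :: "'a set \<Rightarrow> ('a \<times> 'a) set \<Rightarrow> bool" where
  "digraph V A \<longleftrightarrow> finite V \<and> A \<subseteq> V \<times> V \<and> (\<forall>v. (v, v) \<notin> A)"

definition out_ball :: "('a \<times> 'a) set \<Rightarrow> nat \<Rightarrow> 'a \<Rightarrow> 'a set" where
  "out_ball A k v = {w. \<exists>j\<le>k. (v, w) \<in> A ^^ j}"

text \<open>A burning sequence (x_1,...,x_b), stored 0-indexed as a list xs:
V is the union of the balls N^+_{i-1}(x_i), i.e. out_ball A i (xs ! i) for i < b.\<close>
definition burning_seq :: "'a set \<Rightarrow> ('a \<times> 'a) set \<Rightarrow> 'a list \<Rightarrow> bool" where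
  "burning_seq V A xs \<longleftrightarrow> set xs \<subseteq> V \<and>
     V = (\<Union>i<length xs. out_ball A i (xs ! i))"

definition burning_number :: "'a set \<Rightarrow> ('a \<times> 'a) set \<Rightarrow> nat" where
  "burning_number V A = (LEAST b. \<exists>xs. length xs = b \<and> burning_seq V A xs)"

end

theory Submission
  imports Defs
begin

lemma rt_range: "(v,w) \<in> A\<^sup>* \<Longrightarrow> w = v \<or> w \<in> Range A"
  by (induction rule: rtrancl_induct) auto

lemma ball_sub: "out_ball A k v \<subseteq> insert v (Range A)"
proof
  fix w assume "w \<in> out_ball A k v"
  then obtain j where "(v,w) \<in> A ^^ j" unfolding out_ball_def by blast
  then have "(v,w) \<in> A\<^sup>*" by (rule relpow_imp_rtrancl)
  then have "w = v \<or> w \<in> Range A" by (rule rt_range)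
  then show "w \<in> insert v (Range A)" by (rule disjE) simp_all
qed

lemma ball_self: "v \<in> out_ball A k v"
  unfolding out_ball_def by (rule CollectI, rule exI[of _ 0]) simp

lemma ball_arc: "(u,w) \<in> A \<Longrightarrow> 1 \<le> k \<Longrightarrow> w \<in> out_ball A k u"
  unfolding out_ball_def by (rule CollectI, rule exI[of _ 1]) simp

lemma ball_zero: "out_ball A 0 v = {v}"
  unfolding out_ball_def by auto

lemma seq_lower:
  assumes "burning_seq V A xs" "finite (Range A)"
  shows "card V \<le> length xs + card (Range A)"
proof -
  have "V \<subseteq> set xs \<union> Range A"
  proof
    fix v assume "v \<in> V"
    moreover have "V = (\<Union>i<length xs. out_ball A i (xs ! i))"
      using assms(1) unfolding burning_seq_def by (elim conjE)
    ultimately have "v \<in> (\<Union>i<length xs. out_ball A i (xs ! i))" by simp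
    then obtain i where "i < length xs" "v \<in> out_ball A i (xs ! i)" by (elim UN_E) simp
    then have "v \<in> insert (xs!i) (Range A)" using ball_sub[of A i "xs!i"] by blast
    then show "v \<in> set xs \<union> Range A" using \<open>i < length xs\<close> nth_mem[of i xs] by blast
  qed
  then have "card V \<le> card (set xs \<union> Range A)"
    using assms(2) by (intro card_mono) (simp_all)
  also have "\<dots> \<le> card (set xs) + card (Range A)" by (rule card_Un_le)
  also have "\<dots> \<le> length xs + card (Range A)" using card_length[of xs] by linarith
  finally show ?thesis .
qed

lemma seq_small:
  assumes "burning_seq V A xs" "length xs \<le> 1"
  shows "card V \<le> length xs"
proof (cases "length xs = 0")
  case True
  then show ?thesis using assms unfolding burning_seq_def by simp
next
  case False
  then have "length xs = 1" using assms(2) False by linarith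
  then have "{..<length xs} = {0}" by auto
  then have "V = {xs!0}" using assms unfolding burning_seq_def by (simp add: ball_zero)
  then show ?thesis using \<open>length xs = 1\<close> by simp
qed

lemma seq_ok:
  assumes "digraph V A" "set xs \<subseteq> V" "V \<subseteq> (\<Union>i<length xs. out_ball A i (xs!i))"
  shows "burning_seq V A xs"
proof -
  have "out_ball A i (xs!i) \<subseteq> V" if "i < length xs" for i
  proof -
    have "xs!i \<in> V" using that assms(2) by auto
    moreover have "Range A \<subseteq> V" using assms(1) unfolding digraph_def by auto
    ultimately show ?thesis using ball_sub[of A i "xs!i"] by blast
  qed
  then show ?thesis using assms unfolding burning_seq_def by blast
qed

lemma bn_le: "burning_seq V A xs \<Longrightarrow> burning_number V A \<le> length xs"
  unfolding burning_number_def by (rule Least_le) auto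

lemma bn_ge:
  assumes "\<And>xs. burning_seq V A xs \<Longrightarrow> m \<le> length xs" "burning_seq V A ys"
  shows "m \<le> burning_number V A"
proof -
  have "\<exists>xs. length xs = burning_number V A \<and> burning_seq V A xs"
    unfolding burning_number_def by (rule LeastI_ex) (use assms(2) in blast)
  then show ?thesis using assms(1) by force
qed

lemma enum:
  assumes "digraph V A"
  shows "\<exists>xs. burning_seq V A xs \<and> length xs = card V"
proof -
  have "finite V" using assms unfolding digraph_def by simp
  then obtain xs where xs: "set xs = V" "distinct xs"
    using finite_distinct_list by metis
  have "V \<subseteq> (\<Union>i<length xs. out_ball A i (xs!i))"
  proof
    fix v assume "v \<in> V"
    then have "v \<in> set xs" using xs(1) by simp
    then obtain i where i: "i < length xs" "xs!i = v" by (metis in_set_conv_nth)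
    have "xs!i \<in> out_ball A i (xs!i)" by (rule ball_self)
    then have "v \<in> out_ball A i (xs!i)" using i(2) by simp
    then show "v \<in> (\<Union>i<length xs. out_ball A i (xs!i))" using i(1) by (intro UN_I[of i]) simp_all
  qed
  moreover have "set xs \<subseteq> V" using xs(1) by simp
  ultimately have "burning_seq V A xs" by (intro seq_ok[OF assms])
  moreover have "length xs = card V" using distinct_card[OF xs(2)] xs(1) by simp
  ultimately show ?thesis by blast
qed

lemma upper:
  assumes "digraph V A" "(u,w) \<in> A" "card V > 2"
  shows "\<exists>xs. burning_seq V A xs \<and> length xs = card V - 1"
proof -
  have fin: "finite V" and uw: "u \<in> V" "w \<in> V" "u \<noteq> w"
    using assms unfolding digraph_def by auto
  obtain ys where ys: "set ys = V - {u,w}" "distinct ys"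
    using fin finite_distinct_list by (metis finite_Diff)
  have cys: "length ys = card V - 2"
    using ys distinct_card[OF ys(2)] uw fin by (simp add: card_Diff_subset)
  define xs where "xs = ys @ [u]"
  have len: "length xs = card V - 1" using cys assms(3) unfolding xs_def by simp
  have "V \<subseteq> (\<Union>i<length xs. out_ball A i (xs!i))"
  proof
    fix v assume v: "v \<in> V"
    have last: "xs ! length ys = u" "length ys < length xs" unfolding xs_def by simp_all
    show "v \<in> (\<Union>i<length xs. out_ball A i (xs!i))"
    proof (cases "v \<in> set ys")
      case True
      then obtain i where "i < length ys" "ys!i = v" by (auto simp: in_set_conv_nth)
      then have "i < length xs" "xs!i = v" unfolding xs_def by (auto simp: nth_append)
      then show ?thesis using ball_self[of "xs!i" A i] by (intro UN_I[of i]) auto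
    next
      case False
      then have "v = u \<or> v = w" using v ys by auto
      moreover have "1 \<le> length ys" using cys assms(3) by simp
      ultimately have "v \<in> out_ball A (length ys) u"
        using ball_self[of u A "length ys"] ball_arc[OF assms(2), of "length ys"] by auto
      then show ?thesis using last by (intro UN_I[of "length ys"]) auto
    qed
  qed
  moreover have "set xs \<subseteq> V" using ys uw unfolding xs_def by auto
  ultimately show ?thesis using seq_ok assms(1) len by blast
qed

theorem mainTheorem1:
  shows "(\<forall>(V :: 'a set) A. digraph V A \<longrightarrow>
            (A = {} \<or> card V \<in> {1, 2} \<longrightarrow> burning_number V A = card V) \<and>
            (card V > 2 \<and> A \<noteq> {} \<longrightarrow> burning_number V A \<le> card V - 1))
       \<and> (\<forall>n::nat. n > 2 \<longrightarrow>
            (\<exists>(V :: nat set) A. digraph V A \<and> card V = n \<and> A \<noteq> {} \<and>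
               burning_number V A = n - 1))"
proof (intro conjI allI impI)
  fix V :: "'a set" and A
  assume d: "digraph V A"
  obtain ys where ys: "burning_seq V A ys" "length ys = card V" using enum[OF d] by blast
  {
    assume h: "A = {} \<or> card V \<in> {1, 2}"
    have "card V \<le> length xs" if "burning_seq V A xs" for xs
    proof (cases "A = {}")
      case True
      then show ?thesis using seq_lower[OF that] by simp
    next
      case False
      then have "card V \<le> 2" using h by auto
      then show ?thesis using seq_small[OF that] by (cases "length xs \<le> 1") auto
    qed
    then have "card V \<le> burning_number V A" using bn_ge ys(1) by blast
    moreover have "burning_number V A \<le> card V" using bn_le[OF ys(1)] ys(2) by simp
    ultimately show "burning_number V A = card V" by simp
  }
  {
    assume h: "card V > 2 \<and> A \<noteq> {}"
    then obtain u w where "(u,w) \<in> A" by auto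
    then obtain xs where "burning_seq V A xs" "length xs = card V - 1"
      using upper[OF d \<open>(u,w) \<in> A\<close>] h by blast
    then show "burning_number V A \<le> card V - 1" using bn_le by metis
  }
next
  fix n :: nat assume n: "n > 2"
  define V where "V = {0..<n}"
  define A where "A = {(0::nat, 1::nat)}"
  have d: "digraph V A" using n unfolding digraph_def V_def A_def by auto
  have c: "card V = n" unfolding V_def by simp
  obtain xs where xs: "burning_seq V A xs" "length xs = n - 1"
    using upper[OF d, of 0 1] n c unfolding A_def by auto
  have "n - 1 \<le> length ys" if "burning_seq V A ys" for ys
    using seq_lower[OF that] c unfolding A_def by simp
  then have "n - 1 \<le> burning_number V A" using bn_ge xs(1) by blast
  moreover have "burning_number V A \<le> n - 1" using bn_le[OF xs(1)] xs(2) by simp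
  ultimately have "burning_number V A = n - 1" by simp
  then show "\<exists>(V :: nat set) A. digraph V A \<and> card V = n \<and> A \<noteq> {} \<and>
               burning_number V A = n - 1" using d c unfolding A_def by blast
qed

end
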